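(* Let $G$ be any graph of order $n$ and let $H$ be any graph with a root vertex $v$. Then $$\rho(G\circ_v H)=\begin{cases}\rho(G)+n(\rho(H)-1), & \text{if } v\in P_H \text{ for every maximum packing } P_H \text{ of } H,\\ n\rho(H), & \text{if } v\notin P_H \text{ for some maximum packing } P_H \text{ of } H.\end{cases}$$
   Context: All graphs are finite and simple. A packing of $G$ is a set $P\subseteq V(G)$ with $N[u]\cap N[v]=\emptyset$ for all distinct $u,v\in P$ ($N[\cdot]$ the closed neighborhood); $\rho(G)$ is the maximum size of a packing. Given $G$ with $V(G)=\{g_1,\dots,g_n\}$ and a graph $H$ with root $v\in V(H)$, the rooted product $G\circ_v H$ has vertex set $V(G)\times V(H)$ and edge set $\bigcup_{i=1}^n\{(g_i,h)(g_i,h'): hh'\in E(H)\}\cup\{(g_i,v)(g_j,v): g_ig_j\in E(G)\}$ (i.e., a copy of $H$ is attached to each vertex of $G$ by identifying its root with that vertex). *)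

theory Defs
  imports Main
begin

definition simple_graph :: "'a set \<Rightarrow> ('a \<Rightarrow> 'a \<Rightarrow> bool) \<Rightarrow> bool" where
  "simple_graph V E \<longleftrightarrow> finite V \<and> (\<forall>x y. E x y \<longrightarrow> x \<in> V \<and> y \<in> V)
     \<and> (\<forall>x y. E x y \<longrightarrow> E y x) \<and> (\<forall>x. \<not> E x x)"

definition closed_nbhd :: "'a set \<Rightarrow> ('a \<Rightarrow> 'a \<Rightarrow> bool) \<Rightarrow> 'a \<Rightarrow> 'a set" where
  "closed_nbhd V E u = insert u {w \<in> V. E u w}"

definition packing :: "'a set \<Rightarrow> ('a \<Rightarrow> 'a \<Rightarrow> bool) \<Rightarrow> 'a set \<Rightarrow> bool" where
  "packing V E P \<longleftrightarrow> P \<subseteq> V \<and>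
     (\<forall>u\<in>P. \<forall>w\<in>P. u \<noteq> w \<longrightarrow> closed_nbhd V E u \<inter> closed_nbhd V E w = {})"

definition packing_number :: "'a set \<Rightarrow> ('a \<Rightarrow> 'a \<Rightarrow> bool) \<Rightarrow> nat" where
  "packing_number V E = Max {card P | P. packing V E P}"

definition max_packing :: "'a set \<Rightarrow> ('a \<Rightarrow> 'a \<Rightarrow> bool) \<Rightarrow> 'a set \<Rightarrow> bool" where
  "max_packing V E P \<longleftrightarrow> packing V E P \<and> card P = packing_number V E"

definition rooted_prod_V :: "'a set \<Rightarrow> 'b set \<Rightarrow> ('a \<times> 'b) set" where
  "rooted_prod_V VG VH = VG \<times> VH"

definition rooted_prod_E ::
  "'a set \<Rightarrow> ('a \<Rightarrow> 'a \<Rightarrow> bool) \<Rightarrow> 'b set \<Rightarrow> ('b \<Rightarrow> 'b \<Rightarrow> bool) \<Rightarrow> 'b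
     \<Rightarrow> ('a \<times> 'b) \<Rightarrow> ('a \<times> 'b) \<Rightarrow> bool" where
  "rooted_prod_E VG EG VH EH v p q \<longleftrightarrow>
     fst p \<in> VG \<and> fst q \<in> VG \<and>
     ((fst p = fst q \<and> EH (snd p) (snd q)) \<or>
      (snd p = v \<and> snd q = v \<and> EG (fst p) (fst q)))"

end

theory Submission imports Defs begin

lemma packing_iff:
  assumes "simple_graph V E"
  shows "packing V E P \<longleftrightarrow> P \<subseteq> V \<and> (\<forall>u\<in>P. \<forall>w\<in>P. u \<noteq> w \<longrightarrow> \<not> E u w \<and> (\<forall>x. E u x \<longrightarrow> \<not> E w x))"
proof -
  have sym: "\<And>x y. E x y \<Longrightarrow> E y x" and inV: "\<And>x y. E x y \<Longrightarrow> x \<in> V \<and> y \<in> V"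
    and irr: "\<And>x. \<not> E x x" using assms unfolding simple_graph_def by blast+
  have key: "closed_nbhd V E u \<inter> closed_nbhd V E w = {} \<longleftrightarrow> \<not> E u w \<and> (\<forall>x. E u x \<longrightarrow> \<not> E w x)"
    if "u \<noteq> w" "u \<in> V" "w \<in> V" for u w
    unfolding closed_nbhd_def using that sym inV by (auto simp: disjoint_iff)
  show ?thesis unfolding packing_def using key by blast
qed

lemma pn_ge:
  assumes "finite V" "packing V E P" shows "card P \<le> packing_number V E"
proof -
  have "{card P | P. packing V E P} \<subseteq> {0..card V}"
    using assms by (auto simp: packing_def card_mono)
  hence "finite {card P | P. packing V E P}" using finite_subset by blast
  thus ?thesis unfolding packing_number_def using assms(2) by (intro Max_ge) auto
qed

lemma pn_ex:
  assumes "finite V" shows "\<exists>P. packing V E P \<and> card P = packing_number V E"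
proof -
  have "{card P | P. packing V E P} \<subseteq> {0..card V}"
    using assms by (auto simp: packing_def card_mono)
  hence "finite {card P | P. packing V E P}" using finite_subset by blast
  moreover have "packing V E {}" by (simp add: packing_def)
  hence "{card P | P. packing V E P} \<noteq> {}" by blast
  ultimately have "packing_number V E \<in> {card P | P. packing V E P}"
    unfolding packing_number_def by (rule Max_in)
  thus ?thesis by auto
qed

lemma prod_simple:
  assumes "simple_graph VG EG" "simple_graph VH EH" "v \<in> VH"
  shows "simple_graph (rooted_prod_V VG VH) (rooted_prod_E VG EG VH EH v)"
proof -
  have fin: "finite (VG \<times> VH)" using assms unfolding simple_graph_def by simp
  have inH: "\<And>x y. EH x y \<Longrightarrow> x \<in> VH \<and> y \<in> VH" and symH: "\<And>x y. EH x y \<Longrightarrow> EH y x"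
    and irrH: "\<And>x. \<not> EH x x" using assms(2) unfolding simple_graph_def by blast+
  have symG: "\<And>x y. EG x y \<Longrightarrow> EG y x"
    and irrG: "\<And>x. \<not> EG x x" using assms(1) unfolding simple_graph_def by blast+
  have h1: "\<forall>x y. rooted_prod_E VG EG VH EH v x y \<longrightarrow> x \<in> VG \<times> VH \<and> y \<in> VG \<times> VH"
  proof (intro allI impI)
    fix x y assume "rooted_prod_E VG EG VH EH v x y"
    thus "x \<in> VG \<times> VH \<and> y \<in> VG \<times> VH"
      unfolding rooted_prod_E_def using inH assms(3) by (cases x, cases y) auto
  qed
  have h2: "\<forall>x y. rooted_prod_E VG EG VH EH v x y \<longrightarrow> rooted_prod_E VG EG VH EH v y x"
    unfolding rooted_prod_E_def using symH symG by auto
  have h3: "\<forall>x. \<not> rooted_prod_E VG EG VH EH v x x"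
    unfolding rooted_prod_E_def using irrH irrG by auto
  show ?thesis unfolding simple_graph_def rooted_prod_V_def using fin h1 h2 h3 by blast
qed

lemma card_slices:
  assumes "finite A" "finite B" "P \<subseteq> A \<times> B"
  shows "card P = (\<Sum>g\<in>A. card {h. (g,h) \<in> P})"
proof -
  define C where "C = (\<lambda>g. {h. (g,h) \<in> P})"
  have e: "P = Sigma A C" using assms(3) unfolding C_def by auto
  have f: "\<forall>g\<in>A. finite (C g)"
    using assms unfolding C_def by (auto intro: finite_subset[of _ B])
  have "card (Sigma A C) = (\<Sum>g\<in>A. card (C g))" using card_SigmaI[OF assms(1) f] .
  moreover from e have "card P = card (Sigma A C)" by (rule arg_cong)
  ultimately show ?thesis unfolding C_def by simp
qed

lemma sum_ind:
  assumes "finite A" "S \<subseteq> A"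
  shows "(\<Sum>g\<in>A. (int r - 1 + (if g\<in>S then 1 else 0))) = int (card A) * (int r - 1) + int (card S)"
proof -
  have "(\<Sum>g\<in>A. (if g\<in>S then (1::int) else 0)) = int (card S)"
    using assms by (simp add: sum.If_cases Int_absorb1)
  thus ?thesis by (simp add: sum.distrib)
qed

lemma packingD1:
  assumes "simple_graph V E" "packing V E P" "u \<in> P" "w \<in> P" "u \<noteq> w"
  shows "\<not> E u w"
  using assms(2-5) unfolding packing_iff[OF assms(1)] by simp

lemma packingD2:
  assumes "simple_graph V E" "packing V E P" "u \<in> P" "w \<in> P" "u \<noteq> w" "E u y"
  shows "\<not> E w y"
  using assms(2-6) unfolding packing_iff[OF assms(1)] by simp

lemma packingD0:
  assumes "simple_graph V E" "packing V E P"
  shows "P \<subseteq> V"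
  using assms(2) unfolding packing_def by simp

lemma packingI:
  assumes "simple_graph V E" "P \<subseteq> V"
    and "\<And>u w. u \<in> P \<Longrightarrow> w \<in> P \<Longrightarrow> u \<noteq> w \<Longrightarrow> \<not> E u w"
    and "\<And>u w y. u \<in> P \<Longrightarrow> w \<in> P \<Longrightarrow> u \<noteq> w \<Longrightarrow> E u y \<Longrightarrow> E w y \<Longrightarrow> False"
  shows "packing V E P"
  unfolding packing_iff[OF assms(1)] using assms(2-4) by blast

lemma slice_packing:
  assumes "simple_graph VG EG" "simple_graph VH EH" "v \<in> VH"
    and P: "packing (rooted_prod_V VG VH) (rooted_prod_E VG EG VH EH v) P" and g: "g \<in> VG"
  shows "packing VH EH {h. (g,h) \<in> P}"
proof -
  have sp: "simple_graph (rooted_prod_V VG VH) (rooted_prod_E VG EG VH EH v)"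
    by (rule prod_simple[OF assms(1-3)])
  show ?thesis
  proof (rule packingI[OF assms(2)])
    show "{h. (g, h) \<in> P} \<subseteq> VH" using packingD0[OF sp P] by (auto simp: rooted_prod_V_def)
  next
    fix h h' assume h: "h \<in> {h. (g, h) \<in> P}" and h': "h' \<in> {h. (g, h) \<in> P}" and ne: "h \<noteq> h'"
    have m: "(g,h) \<in> P" "(g,h') \<in> P" "(g,h) \<noteq> (g,h')" using h h' ne by auto
    have "EH h h' \<Longrightarrow> rooted_prod_E VG EG VH EH v (g,h) (g,h')"
      using g unfolding rooted_prod_E_def by simp
    thus "\<not> EH h h'" using packingD1[OF sp P m] by blast
  next
    fix h h' x assume h: "h \<in> {h. (g, h) \<in> P}" and h': "h' \<in> {h. (g, h) \<in> P}" and ne: "h \<noteq> h'"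
      and e: "EH h x" "EH h' x"
    have m: "(g,h) \<in> P" "(g,h') \<in> P" "(g,h) \<noteq> (g,h')" using h h' ne by auto
    have "rooted_prod_E VG EG VH EH v (g,h) (g,x)" "rooted_prod_E VG EG VH EH v (g,h') (g,x)"
      using g e unfolding rooted_prod_E_def by simp_all
    thus False using packingD2[OF sp P m] by blast
  qed
qed

lemma root_packing:
  assumes "simple_graph VG EG" "simple_graph VH EH" "v \<in> VH"
    and P: "packing (rooted_prod_V VG VH) (rooted_prod_E VG EG VH EH v) P"
  shows "packing VG EG {g. (g,v) \<in> P}"
proof -
  have sp: "simple_graph (rooted_prod_V VG VH) (rooted_prod_E VG EG VH EH v)"
    by (rule prod_simple[OF assms(1-3)])
  have inV: "\<And>x y. EG x y \<Longrightarrow> x \<in> VG \<and> y \<in> VG" using assms(1) unfolding simple_graph_def by blast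
  show ?thesis
  proof (rule packingI[OF assms(1)])
    show "{g. (g, v) \<in> P} \<subseteq> VG" using packingD0[OF sp P] by (auto simp: rooted_prod_V_def)
  next
    fix g g' assume h: "g \<in> {g. (g, v) \<in> P}" and h': "g' \<in> {g. (g, v) \<in> P}" and ne: "g \<noteq> g'"
    have m: "(g,v) \<in> P" "(g',v) \<in> P" "(g,v) \<noteq> (g',v)" using h h' ne by auto
    have "EG g g' \<Longrightarrow> rooted_prod_E VG EG VH EH v (g,v) (g',v)"
      using inV unfolding rooted_prod_E_def by simp
    thus "\<not> EG g g'" using packingD1[OF sp P m] by blast
  next
    fix g g' x assume h: "g \<in> {g. (g, v) \<in> P}" and h': "g' \<in> {g. (g, v) \<in> P}" and ne: "g \<noteq> g'"
      and e: "EG g x" "EG g' x"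
    have m: "(g,v) \<in> P" "(g',v) \<in> P" "(g,v) \<noteq> (g',v)" using h h' ne by auto
    have "rooted_prod_E VG EG VH EH v (g,v) (x,v)" "rooted_prod_E VG EG VH EH v (g',v) (x,v)"
      using inV e unfolding rooted_prod_E_def by simp_all
    thus False using packingD2[OF sp P m] by blast
  qed
qed

lemma lower2:
  assumes "simple_graph VG EG" "simple_graph VH EH" "v \<in> VH"
    and Q: "packing VH EH Q" and vQ: "v \<notin> Q"
  shows "packing (rooted_prod_V VG VH) (rooted_prod_E VG EG VH EH v) (VG \<times> Q)"
proof -
  have sp: "simple_graph (rooted_prod_V VG VH) (rooted_prod_E VG EG VH EH v)"
    by (rule prod_simple[OF assms(1-3)])
  show ?thesis
  proof (rule packingI[OF sp])
    show "VG \<times> Q \<subseteq> rooted_prod_V VG VH" using packingD0[OF assms(2) Q] by (auto simp: rooted_prod_V_def)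
  next
    fix p q assume p: "p \<in> VG \<times> Q" and q: "q \<in> VG \<times> Q" and ne: "p \<noteq> q"
    obtain g h g' h' where pq: "p = (g,h)" "q = (g',h')" by (cases p, cases q) blast
    have hQ: "h \<in> Q" "h' \<in> Q" using p q pq by auto
    have hv: "h \<noteq> v" using hQ vQ by auto
    show "\<not> rooted_prod_E VG EG VH EH v p q"
    proof
      assume "rooted_prod_E VG EG VH EH v p q"
      hence "g = g'" "EH h h'" using hv unfolding pq rooted_prod_E_def by auto
      moreover hence "h \<noteq> h'" using ne pq by auto
      ultimately show False using packingD1[OF assms(2) Q hQ] by blast
    qed
  next
    fix p q x assume p: "p \<in> VG \<times> Q" and q: "q \<in> VG \<times> Q" and ne: "p \<noteq> q"
      and e: "rooted_prod_E VG EG VH EH v p x" "rooted_prod_E VG EG VH EH v q x"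
    obtain g h g' h' where pq: "p = (g,h)" "q = (g',h')" by (cases p, cases q) blast
    have hQ: "h \<in> Q" "h' \<in> Q" using p q pq by auto
    have hv: "h \<noteq> v" "h' \<noteq> v" using hQ vQ by auto
    have "fst x = g" "EH h (snd x)" "fst x = g'" "EH h' (snd x)"
      using e hv unfolding pq rooted_prod_E_def by auto
    moreover hence "h \<noteq> h'" using ne pq by auto
    ultimately show False using packingD2[OF assms(2) Q hQ] by blast
  qed
qed

lemma lower1:
  assumes "simple_graph VG EG" "simple_graph VH EH" "v \<in> VH"
    and Q: "packing VG EG Q" and R: "packing VH EH R" and vR: "v \<in> R"
  shows "packing (rooted_prod_V VG VH) (rooted_prod_E VG EG VH EH v)
     {(g,h). g \<in> VG \<and> h \<in> R \<and> (h = v \<longrightarrow> g \<in> Q)}"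
proof -
  have sp: "simple_graph (rooted_prod_V VG VH) (rooted_prod_E VG EG VH EH v)"
    by (rule prod_simple[OF assms(1-3)])
  have irr: "\<And>x. \<not> EH x x" using assms(2) unfolding simple_graph_def by blast
  have hvv: "\<And>h. h \<in> R \<Longrightarrow> h \<noteq> v \<Longrightarrow> \<not> EH h v"
    using packingD1[OF assms(2) R _ vR] by blast
  show ?thesis
  proof (rule packingI[OF sp])
    show "{(g,h). g \<in> VG \<and> h \<in> R \<and> (h = v \<longrightarrow> g \<in> Q)} \<subseteq> rooted_prod_V VG VH"
      using packingD0[OF assms(2) R] by (auto simp: rooted_prod_V_def)
  next
    fix p q assume p: "p \<in> {(g,h). g \<in> VG \<and> h \<in> R \<and> (h = v \<longrightarrow> g \<in> Q)}"
      and q: "q \<in> {(g,h). g \<in> VG \<and> h \<in> R \<and> (h = v \<longrightarrow> g \<in> Q)}" and ne: "p \<noteq> q"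
    obtain g h g' h' where pq: "p = (g,h)" "q = (g',h')" by (cases p, cases q) blast
    have hR: "h \<in> R" "h' \<in> R" "h = v \<Longrightarrow> g \<in> Q" "h' = v \<Longrightarrow> g' \<in> Q"
      using p q pq by auto
    have nc: "g = g' \<Longrightarrow> h \<noteq> h'" "h = h' \<Longrightarrow> g \<noteq> g'" using ne pq by auto
    show "\<not> rooted_prod_E VG EG VH EH v p q"
    proof
      assume "rooted_prod_E VG EG VH EH v p q"
      hence "(g = g' \<and> EH h h') \<or> (h = v \<and> h' = v \<and> EG g g')"
        unfolding pq rooted_prod_E_def by auto
      thus False
      proof
        assume "g = g' \<and> EH h h'"
        thus False using nc packingD1[OF assms(2) R hR(1,2)] by blast
      next
        assume a: "h = v \<and> h' = v \<and> EG g g'"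
        hence "g \<in> Q" "g' \<in> Q" "g \<noteq> g'" using hR nc by auto
        thus False using a packingD1[OF assms(1) Q] by blast
      qed
    qed
  next
    fix p q x assume p: "p \<in> {(g,h). g \<in> VG \<and> h \<in> R \<and> (h = v \<longrightarrow> g \<in> Q)}"
      and q: "q \<in> {(g,h). g \<in> VG \<and> h \<in> R \<and> (h = v \<longrightarrow> g \<in> Q)}" and ne: "p \<noteq> q"
      and e: "rooted_prod_E VG EG VH EH v p x" "rooted_prod_E VG EG VH EH v q x"
    obtain g h g' h' where pq: "p = (g,h)" "q = (g',h')" by (cases p, cases q) blast
    obtain y z where x: "x = (y,z)" by (cases x) blast
    have hR: "h \<in> R" "h' \<in> R" "h = v \<Longrightarrow> g \<in> Q" "h' = v \<Longrightarrow> g' \<in> Q"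
      using p q pq by auto
    have nc: "g = g' \<Longrightarrow> h \<noteq> h'" "h = h' \<Longrightarrow> g \<noteq> g'" using ne pq by auto
    have e1: "(g = y \<and> EH h z) \<or> (h = v \<and> z = v \<and> EG g y)"
      using e(1) unfolding pq x rooted_prod_E_def by auto
    have e2: "(g' = y \<and> EH h' z) \<or> (h' = v \<and> z = v \<and> EG g' y)"
      using e(2) unfolding pq x rooted_prod_E_def by auto
    show False
    proof (cases "g = y \<and> EH h z")
      case True
      show False
      proof (cases "g' = y \<and> EH h' z")
        case True2: True
        thus False using True nc packingD2[OF assms(2) R hR(1,2)] by blast
      next
        case False
        hence "h' = v" "z = v" using e2 by auto
        moreover have "h \<noteq> v" using True irr \<open>z = v\<close> by auto
        ultimately show False using True hvv hR by auto
      qed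
    next
      case False
      hence a: "h = v" "z = v" "EG g y" using e1 by auto
      show False
      proof (cases "g' = y \<and> EH h' z")
        case True
        have "h' \<noteq> v" using True irr a by auto
        thus False using True hvv hR a by auto
      next
        case False
        hence b: "h' = v" "EG g' y" using e2 by auto
        have "g \<in> Q" "g' \<in> Q" "g \<noteq> g'" using hR nc a b by auto
        thus False using a b packingD2[OF assms(1) Q] by blast
      qed
    qed
  qed
qed

theorem mainTheorem15:
  fixes VG :: "'a set" and EG :: "'a \<Rightarrow> 'a \<Rightarrow> bool"
    and VH :: "'b set" and EH :: "'b \<Rightarrow> 'b \<Rightarrow> bool" and v :: 'b and n :: nat
  assumes "simple_graph VG EG" and "simple_graph VH EH" and "v \<in> VH"
    and "card VG = n"
  shows "int (packing_number (rooted_prod_V VG VH) (rooted_prod_E VG EG VH EH v)) =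
     (if (\<forall>P. max_packing VH EH P \<longrightarrow> v \<in> P)
      then int (packing_number VG EG) + int n * (int (packing_number VH EH) - 1)
      else int n * int (packing_number VH EH))"
proof -
  define V where "V = rooted_prod_V VG VH"
  define E where "E = rooted_prod_E VG EG VH EH v"
  have finG: "finite VG" using assms(1) unfolding simple_graph_def by simp
  have finH: "finite VH" using assms(2) unfolding simple_graph_def by simp
  have finV: "finite V" unfolding V_def rooted_prod_V_def using finG finH by simp
  have sp: "simple_graph V E" unfolding V_def E_def by (rule prod_simple[OF assms(1-3)])
  obtain P where P: "packing V E P" "card P = packing_number V E" using pn_ex[OF finV] by blast
  have PV: "P \<subseteq> VG \<times> VH" using packingD0[OF sp P(1)] unfolding V_def rooted_prod_V_def .
  have cardP: "card P = (\<Sum>g\<in>VG. card {h. (g,h) \<in> P})" by (rule card_slices[OF finG finH PV])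
  have slice: "\<And>g. g \<in> VG \<Longrightarrow> packing VH EH {h. (g,h) \<in> P}"
    using slice_packing[OF assms(1-3)] P(1) unfolding V_def E_def by blast
  have sliceb: "\<And>g. g \<in> VG \<Longrightarrow> card {h. (g,h) \<in> P} \<le> packing_number VH EH"
    using pn_ge[OF finH] slice by blast
  obtain R where R: "packing VH EH R" "card R = packing_number VH EH" using pn_ex[OF finH] by blast
  have RV: "R \<subseteq> VH" using packingD0[OF assms(2) R(1)] .
  show ?thesis
  proof (cases "\<forall>P. max_packing VH EH P \<longrightarrow> v \<in> P")
    case True
    have vR: "v \<in> R" using True R unfolding max_packing_def by blast
    define S where "S = {g. (g,v) \<in> P}"
    have Spack: "packing VG EG S" unfolding S_def
      using root_packing[OF assms(1-3)] P(1) unfolding V_def E_def by blast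
    have SG: "S \<subseteq> VG" using packingD0[OF assms(1) Spack] .
    have Sc: "card S \<le> packing_number VG EG" using pn_ge[OF finG Spack] .
    have bnd: "int (card {h. (g,h) \<in> P}) \<le> int (packing_number VH EH) - 1 + (if g \<in> S then 1 else 0)"
      if g: "g \<in> VG" for g
    proof (cases "g \<in> S")
      case True thus ?thesis using sliceb[OF g] by simp
    next
      case False
      hence "v \<notin> {h. (g,h) \<in> P}" unfolding S_def by simp
      hence "\<not> max_packing VH EH {h. (g,h) \<in> P}" using \<open>\<forall>P. max_packing VH EH P \<longrightarrow> v \<in> P\<close> by blast
      hence "card {h. (g,h) \<in> P} \<noteq> packing_number VH EH" using slice[OF g] unfolding max_packing_def by blast
      thus ?thesis using sliceb[OF g] False by simp
    qed
    have up: "int (packing_number V E) \<le> int (packing_number VG EG) + int n * (int (packing_number VH EH) - 1)"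
    proof -
      have "int (packing_number V E) = (\<Sum>g\<in>VG. int (card {h. (g,h) \<in> P}))"
        using cardP P(2) by simp
      also have "\<dots> \<le> (\<Sum>g\<in>VG. int (packing_number VH EH) - 1 + (if g \<in> S then 1 else 0))"
        by (rule sum_mono) (rule bnd)
      also have "\<dots> = int (card VG) * (int (packing_number VH EH) - 1) + int (card S)"
        by (rule sum_ind[OF finG SG])
      finally show ?thesis using Sc assms(4) by simp
    qed
    obtain Q where Q: "packing VG EG Q" "card Q = packing_number VG EG" using pn_ex[OF finG] by blast
    have QG: "Q \<subseteq> VG" using packingD0[OF assms(1) Q(1)] .
    define P' where "P' = {(g,h). g \<in> VG \<and> h \<in> R \<and> (h = v \<longrightarrow> g \<in> Q)}"
    have P'p: "packing V E P'" unfolding P'_def V_def E_def by (rule lower1[OF assms(1-3) Q(1) R(1) vR])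
    have P'V: "P' \<subseteq> VG \<times> VH" unfolding P'_def using RV by auto
    have sl: "int (card {h. (g,h) \<in> P'}) = int (packing_number VH EH) - 1 + (if g \<in> Q then 1 else 0)"
      if g: "g \<in> VG" for g
    proof (cases "g \<in> Q")
      case True
      hence "{h. (g,h) \<in> P'} = R" unfolding P'_def using g by auto
      thus ?thesis using True R(2) by simp
    next
      case False
      hence "{h. (g,h) \<in> P'} = R - {v}" unfolding P'_def using g by auto
      moreover have "finite R" using finH RV finite_subset by blast
      moreover have "card R \<ge> 1" using vR \<open>finite R\<close> by (metis One_nat_def Suc_leI card_gt_0_iff empty_iff)
      ultimately show ?thesis using False R(2) vR by (simp add: of_nat_diff)
    qed
    have "int (card P') = (\<Sum>g\<in>VG. int (card {h. (g,h) \<in> P'}))"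
      using card_slices[OF finG finH P'V] by simp
    also have "\<dots> = (\<Sum>g\<in>VG. int (packing_number VH EH) - 1 + (if g \<in> Q then 1 else 0))"
      by (rule sum.cong) (auto simp: sl)
    also have "\<dots> = int (card VG) * (int (packing_number VH EH) - 1) + int (card Q)"
      by (rule sum_ind[OF finG QG])
    finally have lo: "int (packing_number VG EG) + int n * (int (packing_number VH EH) - 1) \<le> int (packing_number V E)"
      using pn_ge[OF finV P'p] Q(2) assms(4) by simp
    show ?thesis using True up lo unfolding V_def E_def by simp
  next
    case False
    then obtain R2 where R2: "max_packing VH EH R2" "v \<notin> R2" by blast
    have R2p: "packing VH EH R2" "card R2 = packing_number VH EH" using R2(1) unfolding max_packing_def by auto
    have R2V: "R2 \<subseteq> VH" using packingD0[OF assms(2) R2p(1)] .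
    have lp: "packing V E (VG \<times> R2)" unfolding V_def E_def by (rule lower2[OF assms(1-3) R2p(1) R2(2)])
    have "finite R2" using finH R2V finite_subset by blast
    have "card (VG \<times> R2) = n * packing_number VH EH"
      using R2p(2) assms(4) by (simp add: card_cartesian_product)
    hence lo: "n * packing_number VH EH \<le> packing_number V E" using pn_ge[OF finV lp] by simp
    have "card P \<le> (\<Sum>g\<in>VG. packing_number VH EH)"
      unfolding cardP by (rule sum_mono) (rule sliceb)
    hence up: "packing_number V E \<le> n * packing_number VH EH" using P(2) assms(4) by simp
    have "packing_number V E = n * packing_number VH EH" using lo up by simp
    moreover have "\<not> (\<forall>P. max_packing VH EH P \<longrightarrow> v \<in> P)" using False .
    ultimately show ?thesis unfolding V_def E_def by (simp only: if_False of_nat_mult)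
  qed
qed

end
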